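(* Let $\omega$ be the automorphism of $\mathcal A_\theta^{alg}$ with $U_1\mapsto U_2^{-1}$, $U_2\mapsto\lambda^{-1/2}U_1U_2^{-1}$, and let $H^0(\mathcal A_\theta^{alg},{}_{\omega}\mathcal A_\theta^{alg\ast})$ be the space of formal series $\varphi=\sum\varphi_{n,m}U_1^nU_2^m$ with $(\omega\cdot a)\varphi=\varphi a$ for all $a\in\mathcal A_\theta^{alg}$. Let $\mathbb Z_6$ be generated by the automorphism $-\omega$ with $U_1\mapsto U_2$, $U_2\mapsto\lambda^{-1/2}U_1^{-1}U_2$, acting termwise on this space. Then $H^0(\mathcal A_\theta^{alg},{}_{\omega}\mathcal A_\theta^{alg\ast})^{\mathbb Z_6}\cong\mathbb C^2$.
   Context: Let $\theta\in\mathbb R\setminus\mathbb Q$, $\lambda=e^{2\pi i\theta}$, $\lambda^s:=e^{2\pi i\theta s}$. $\mathcal A_\theta^{alg}$ is the complex algebra of finite sums $\sum a_{n,m}U_1^nU_2^m$ with $U_1,U_2$ invertible and $U_2U_1=\lambda U_1U_2$; formal series $\sum_{(n,m)\in\mathbb Z^2}\varphi_{n,m}U_1^nU_2^m$ with arbitrary coefficients form an $\mathcal A_\theta^{alg}$-bimodule via multiplication. Termwise action of an automorphism $h$: $h\cdot\sum\varphi_{n,m}U_1^nU_2^m=\sum\varphi_{n,m}\,h\cdot(U_1^nU_2^m)$. *)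

theory Defs
  imports Complex_Main
begin

definition lam :: "real \<Rightarrow> real \<Rightarrow> complex" where
  "lam th s = exp (2 * of_real pi * \<i> * of_real th * of_real s)"

text \<open>A scalar multiple of a monomial c U1^a U2^b is encoded as (c, a, b).
  Product uses U2 U1 = lambda U1 U2, hence U1^a U2^b U1^p U2^q = lambda^(b p) U1^(a+p) U2^(b+q).\<close>
type_synonym mono = "complex \<times> int \<times> int"

definition mmul :: "real \<Rightarrow> mono \<Rightarrow> mono \<Rightarrow> mono" where
  "mmul th x y = (case x of (c, a, b) \<Rightarrow> case y of (d, p, q) \<Rightarrow>
      (c * d * lam th (of_int (b * p)), a + p, b + q))"

definition minv :: "real \<Rightarrow> mono \<Rightarrow> mono" where
  "minv th x = (case x of (c, a, b) \<Rightarrow> (inverse c * lam th (of_int (a * b)), - a, - b))"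

definition mpow :: "real \<Rightarrow> mono \<Rightarrow> int \<Rightarrow> mono" where
  "mpow th x k = (if 0 \<le> k then (mmul th x ^^ nat k) (1, 0, 0)
                  else (mmul th (minv th x) ^^ nat (- k)) (1, 0, 0))"

text \<open>Image of U1^n U2^m under the automorphism with U1 \<mapsto> u1, U2 \<mapsto> u2.\<close>
definition hmono :: "real \<Rightarrow> mono \<Rightarrow> mono \<Rightarrow> int \<times> int \<Rightarrow> mono" where
  "hmono th u1 u2 nm = mmul th (mpow th u1 (fst nm)) (mpow th u2 (snd nm))"

text \<open>Termwise action on formal series (coefficient functions Z^2 -> C):
  h . sum phi_nm U1^n U2^m = sum phi_nm h(U1^n U2^m).\<close>
definition act :: "real \<Rightarrow> mono \<Rightarrow> mono \<Rightarrow> (int \<times> int \<Rightarrow> complex) \<Rightarrow> (int \<times> int \<Rightarrow> complex)" where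
  "act th u1 u2 phi kl = (\<Sum>x \<in> {x. snd (hmono th u1 u2 x) = kl}. phi x * fst (hmono th u1 u2 x))"

text \<open>Left multiplication of a formal series by a finite sum a (finitely supported), and right multiplication.\<close>
definition lmul :: "real \<Rightarrow> (int \<times> int \<Rightarrow> complex) \<Rightarrow> (int \<times> int \<Rightarrow> complex) \<Rightarrow> (int \<times> int \<Rightarrow> complex)" where
  "lmul th a phi kl = (\<Sum>nm \<in> {x. a x \<noteq> 0}.
      a nm * lam th (of_int (snd nm * (fst kl - fst nm))) * phi (fst kl - fst nm, snd kl - snd nm))"

definition rmul :: "real \<Rightarrow> (int \<times> int \<Rightarrow> complex) \<Rightarrow> (int \<times> int \<Rightarrow> complex) \<Rightarrow> (int \<times> int \<Rightarrow> complex)" where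
  "rmul th phi a kl = (\<Sum>pq \<in> {x. a x \<noteq> 0}.
      phi (fst kl - fst pq, snd kl - snd pq) * a pq * lam th (of_int ((snd kl - snd pq) * fst pq)))"

definition omega1 :: mono where "omega1 = (1, 0, -1)"
definition omega2 :: "real \<Rightarrow> mono" where "omega2 th = (lam th (-1/2), 1, -1)"

definition g1 :: mono where "g1 = (1, 0, 1)"
definition g2 :: "real \<Rightarrow> mono" where "g2 th = (lam th (-1/2), -1, 1)"

definition H0 :: "real \<Rightarrow> (int \<times> int \<Rightarrow> complex) set" where
  "H0 th = {phi. \<forall>a. finite {x. a x \<noteq> 0} \<longrightarrow>
      lmul th (act th omega1 (omega2 th) a) phi = rmul th phi a}"

definition H0_inv :: "real \<Rightarrow> (int \<times> int \<Rightarrow> complex) set" where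
  "H0_inv th = {phi \<in> H0 th. \<forall>k::nat. (act th g1 (g2 th) ^^ k) phi = phi}"

end

theory Submission imports Defs begin

lemma lam_add: "lam th (s + t) = lam th s * lam th t"
  unfolding lam_def by (simp add: exp_add[symmetric] algebra_simps)

lemma lam_0[simp]: "lam th 0 = 1" unfolding lam_def by simp

lemma lam_nz[simp]: "lam th s \<noteq> 0" unfolding lam_def by simp

lemma lam_inv: "lam th (-s) * lam th s = 1"
  by (metis lam_0 lam_add add.commute add.right_inverse)

lemma lam_inverse: "inverse (lam th s) = lam th (-s)"
  using lam_inv[of th s] by (metis inverse_unique mult.commute)

lemma iter_lam:
  "((mmul th (lam th s, a, b)) ^^ k) (1,0,0) =
    (lam th (s * real k + of_int a * of_int b * real k * (real k - 1) / 2), int k * a, int k * b)"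
proof (induction k)
  case 0 then show ?case by simp
next
  case (Suc k)
  have "lam th s * lam th (s * real k + of_int a * of_int b * real k * (real k - 1) / 2) * lam th (of_int (b * (int k * a)))
     = lam th (s * real (Suc k) + of_int a * of_int b * real (Suc k) * (real (Suc k) - 1) / 2)"
    unfolding lam_add[symmetric] by (rule arg_cong[where f="lam th"]) (simp add: field_simps)
  then show ?case using Suc by (simp add: mmul_def algebra_simps)
qed

lemma mpow_lam:
  "mpow th (lam th s, a, b) n =
    (lam th (s * of_int n + of_int a * of_int b * of_int n * (of_int n - 1) / 2), n * a, n * b)"
proof (cases "0 \<le> n")
  case True
  then show ?thesis by (simp add: mpow_def iter_lam)
next
  case False
  have mi: "minv th (lam th s, a, b) = (lam th (-s + of_int (a*b)), -a, -b)"
    unfolding minv_def by (simp add: lam_add[symmetric] lam_inverse)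
  have e: "lam th ((- s + of_int (a * b)) * real (nat (- n)) + of_int (- a) * of_int (- b) * real (nat (- n)) * (real (nat (- n)) - 1) / 2)
     = lam th (s * of_int n + of_int a * of_int b * of_int n * (of_int n - 1) / 2)"
    using False by (intro arg_cong[where f="lam th"]) (simp add: field_simps)
  show ?thesis using False e by (simp add: mpow_def mi iter_lam)
qed

lemma hmono_omega:
  "hmono th omega1 (omega2 th) (n, m) = (lam th (- (of_int m * of_int m)/2 - of_int n * of_int m), m, -n-m)"
proof -
  have o1: "omega1 = (lam th 0, 0, -1)" by (simp add: omega1_def)
  show ?thesis
    unfolding hmono_def o1 omega2_def mpow_lam
    apply (simp add: mmul_def lam_add[symmetric] power2_eq_square field_simps)
    apply (rule arg_cong[where f="lam th"])
    by (simp add: field_simps)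
qed

lemma hmono_g:
  "hmono th g1 (g2 th) (n, m) = (lam th (- (of_int m * of_int m)/2 - of_int n * of_int m), -m, n+m)"
proof -
  have o1: "g1 = (lam th 0, 0, 1)" by (simp add: g1_def)
  show ?thesis
    unfolding hmono_def o1 g2_def mpow_lam
    apply (simp add: mmul_def lam_add[symmetric] power2_eq_square field_simps)
    apply (rule arg_cong[where f="lam th"])
    by (simp add: field_simps)
qed

lemma act_omega:
  "act th omega1 (omega2 th) phi (k, l) = phi (-k-l, k) * lam th (- (of_int k * of_int k)/2 - of_int (-k-l) * of_int k)"
proof -
  have "{x. snd (hmono th omega1 (omega2 th) x) = (k, l)} = {(-k-l, k)}"
    by (auto simp: hmono_omega)
  then show ?thesis unfolding act_def by (simp add: hmono_omega)
qed

lemma act_g: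
  "act th g1 (g2 th) phi (k, l) = phi (l+k, -k) * lam th (- (of_int (-k) * of_int (-k))/2 - of_int (l+k) * of_int (-k))"
proof -
  have "{x. snd (hmono th g1 (g2 th) x) = (k, l)} = {(l+k, -k)}"
    by (auto simp: hmono_g)
  then show ?thesis unfolding act_def by (simp add: hmono_g)
qed

lemma lmul_act:
  "lmul th (act th omega1 (omega2 th) a) phi (k, l) =
    (\<Sum>pq\<in>{x. a x \<noteq> 0}. a pq * lam th (- (of_int (snd pq) * of_int (snd pq))/2 - of_int (fst pq) * of_int (snd pq))
        * lam th (of_int ((- fst pq - snd pq) * (k - snd pq))) * phi (k - snd pq, l + fst pq + snd pq))"
  unfolding lmul_def
proof (rule sym, rule sum.reindex_bij_witness[where j = "\<lambda>(p,q). (q, -p-q)" and i = "\<lambda>(n,m). (-n-m, n)"])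
  fix x assume "x \<in> {x. a x \<noteq> 0}"
  then show "(case case x of (p, q) \<Rightarrow> (q, - p - q) of (n, m) \<Rightarrow> (- n - m, n)) = x"
    by (cases x) auto
next
  fix x assume "x \<in> {x. a x \<noteq> 0}"
  then show "(case x of (p, q) \<Rightarrow> (q, - p - q)) \<in> {x. act th omega1 (omega2 th) a x \<noteq> 0}"
    by (cases x) (simp add: act_omega)
next
  fix x :: "int \<times> int" assume "x \<in> {x. act th omega1 (omega2 th) a x \<noteq> 0}"
  then show "(case case x of (n, m) \<Rightarrow> (- n - m, n) of (p, q) \<Rightarrow> (q, - p - q)) = x"
    by (cases x) auto
next
  fix x :: "int \<times> int" assume "x \<in> {x. act th omega1 (omega2 th) a x \<noteq> 0}"
  then show "(case x of (n, m) \<Rightarrow> (- n - m, n)) \<in> {x. a x \<noteq> 0}"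
    by (cases x) (simp add: act_omega)
next
  fix x assume "x \<in> {x. a x \<noteq> 0}"
  then show "act th omega1 (omega2 th) a (case x of (p, q) \<Rightarrow> (q, - p - q)) *
         lam th (of_int (snd (case x of (p, q) \<Rightarrow> (q, - p - q)) * (fst (k, l) - fst (case x of (p, q) \<Rightarrow> (q, - p - q))))) *
         phi (fst (k, l) - fst (case x of (p, q) \<Rightarrow> (q, - p - q)), snd (k, l) - snd (case x of (p, q) \<Rightarrow> (q, - p - q))) =
         a x * lam th (- (of_int (snd x) * of_int (snd x)) / 2 - of_int (fst x) * of_int (snd x)) * lam th (of_int ((- fst x - snd x) * (k - snd x))) *
         phi (k - snd x, l + fst x + snd x)"
    by (cases x) (simp add: act_omega algebra_simps)
qed

definition Q :: "int \<Rightarrow> int \<Rightarrow> real" where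
  "Q k l = (of_int k * of_int k + 4 * of_int k * of_int l + of_int l * of_int l) / 6"

definition Fb :: "real \<Rightarrow> complex \<times> complex \<Rightarrow> int \<times> int \<Rightarrow> complex" where
  "Fb th x = (\<lambda>(k, l). lam th (Q k l) * (if (l - k) mod 3 = 0 then fst x else snd x))"

lemma id_omega:
  "lam th (- (of_int q * of_int q) / 2 - of_int p * of_int q) * lam th (of_int ((- p - q) * (k - q)))
    * lam th (Q (k - q) (l + p + q)) = lam th (Q (k - p) (l - q)) * lam th (of_int ((l - q) * p))"
  unfolding lam_add[symmetric] Q_def
  by (rule arg_cong[where f="lam th"]) (simp add: field_simps)

lemma id_g:
  "lam th (Q (l + k) (- k)) * lam th (- (of_int (- k) * of_int (- k)) / 2 - of_int (l + k) * of_int (- k))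
    = lam th (Q k l)"
  unfolding lam_add[symmetric] Q_def
  by (rule arg_cong[where f="lam th"]) (simp add: field_simps)

lemma class_omega: "((l + p + q) - (k - q)) mod 3 = ((l - q) - (k - p)) mod (3::int)"
proof -
  have "(l + p + q) - (k - q) = ((l - q) - (k - p)) + q * 3" by simp
  then show ?thesis by (simp only: mod_mult_self1)
qed

lemma class_g: "((- k) - (l + k)) mod 3 = 0 \<longleftrightarrow> (l - k) mod (3::int) = 0"
  by presburger

lemma Fb_H0: "Fb th x \<in> H0 th"
  unfolding H0_def
proof (intro CollectI allI impI ext)
  fix a :: "int \<times> int \<Rightarrow> complex" and kl :: "int \<times> int"
  obtain k l where kl: "kl = (k, l)" by (cases kl)
  show "lmul th (act th omega1 (omega2 th) a) (Fb th x) kl = rmul th (Fb th x) a kl"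
    unfolding kl lmul_act rmul_def
  proof (rule sum.cong[OF refl])
    fix pq :: "int \<times> int"
    obtain p q where pq: "pq = (p, q)" by (cases pq)
    show "a pq * lam th (- (of_int (snd pq) * of_int (snd pq)) / 2 - of_int (fst pq) * of_int (snd pq)) *
          lam th (of_int ((- fst pq - snd pq) * (k - snd pq))) * Fb th x (k - snd pq, l + fst pq + snd pq) =
          Fb th x (fst (k, l) - fst pq, snd (k, l) - snd pq) * a pq * lam th (of_int ((snd (k, l) - snd pq) * fst pq))"
    proof -
      let ?v1 = "if (l + p + q - (k - q)) mod 3 = 0 then fst x else snd x"
      let ?v2 = "if (l - q - (k - p)) mod 3 = 0 then fst x else snd x"
      have v: "?v1 = ?v2" using class_omega[of l p q k] by simp
      have "a (p,q) * lam th (- (of_int q * of_int q) / 2 - of_int p * of_int q) *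
          lam th (of_int ((- p - q) * (k - q))) * (lam th (Q (k - q) (l + p + q)) * ?v1)
        = a (p,q) * (lam th (- (of_int q * of_int q) / 2 - of_int p * of_int q) *
          lam th (of_int ((- p - q) * (k - q))) * lam th (Q (k - q) (l + p + q))) * ?v2"
        unfolding v by (simp only: ac_simps)
      also have "\<dots> = (lam th (Q (k - p) (l - q)) * ?v2) * a (p,q) * lam th (of_int ((l - q) * p))"
        unfolding id_omega by (simp only: ac_simps)
      finally show ?thesis unfolding pq Fb_def by simp
    qed
  qed
qed

lemma Fb_g: "act th g1 (g2 th) (Fb th x) = Fb th x"
proof (rule ext)
  fix kl :: "int \<times> int"
  obtain k l where kl: "kl = (k, l)" by (cases kl)
  show "act th g1 (g2 th) (Fb th x) kl = Fb th x kl"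
  proof -
    have v: "(if (- k - (l + k)) mod 3 = 0 then fst x else snd x) = (if (l - k) mod 3 = 0 then fst x else snd x)"
      using class_g[of k l] by simp
    have "act th g1 (g2 th) (Fb th x) kl = (lam th (Q (l + k) (- k)) * (if (- k - (l + k)) mod 3 = 0 then fst x else snd x)) *
      lam th (- (of_int (- k) * of_int (- k)) / 2 - of_int (l + k) * of_int (- k))"
      unfolding kl act_g Fb_def by (simp only: prod.case)
    also have "\<dots> = (lam th (Q (l + k) (- k)) * lam th (- (of_int (- k) * of_int (- k)) / 2 - of_int (l + k) * of_int (- k)))
       * (if (l - k) mod 3 = 0 then fst x else snd x)"
      unfolding v by (simp only: ac_simps)
    also have "\<dots> = Fb th x kl" unfolding id_g kl Fb_def by (simp only: prod.case)
    finally show ?thesis .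
  qed
qed

lemma funpow_fix: "f x = x \<Longrightarrow> (f ^^ n) x = x"
  by (induction n) auto

lemma Fb_inv: "Fb th x \<in> H0_inv th"
  unfolding H0_inv_def using Fb_H0[of th x] funpow_fix[of "act th g1 (g2 th)" "Fb th x", OF Fb_g] by simp

lemma psi_struct:
  fixes psi :: "int \<times> int \<Rightarrow> complex"
  assumes R1: "\<And>k l. psi (k, l + 1) = psi (k - 1, l)"
    and R2: "\<And>k l. psi (k - 1, l + 1) = psi (k, l - 1)"
    and R3: "\<And>k l. psi (k, l) = psi (l + k, - k)"
  shows "psi (k, l) = (if (l - k) mod 3 = 0 then psi (0, 0) else psi (0, 1))"
proof -
  have diag: "\<forall>j. psi (i, j) = psi (0, j - i)" for i
  proof (induction i rule: int_induct[where k=0])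
    case base then show ?case by simp
  next
    case (step1 i)
    show ?case
    proof
      fix j
      have "psi (i + 1, j) = psi (i, j - 1)" using R1[of "i+1" "j-1"] by simp
      also have "\<dots> = psi (0, j - (i + 1))" using step1(2) by (simp add: algebra_simps)
      finally show "psi (i + 1, j) = psi (0, j - (i + 1))" .
    qed
  next
    case (step2 i)
    show ?case
    proof
      fix j
      have "psi (i - 1, j) = psi (i, j + 1)" using R1[of i j] by simp
      also have "\<dots> = psi (0, j - (i - 1))" using step2(2) by (simp add: algebra_simps)
      finally show "psi (i - 1, j) = psi (0, j - (i - 1))" .
    qed
  qed
  have per: "psi (0, n + 3) = psi (0, n)" for n
  proof -
    have "psi (0, n + 3) = psi (-1, n + 2)" using diag[rule_format, of "-1" "n+2"] by (simp add: add.commute)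
    also have "\<dots> = psi (0, n)" using R2[of 0 "n+1"] by (simp add: add.commute)
    finally show ?thesis .
  qed
  have perq: "\<forall>r. psi (0, 3 * q + r) = psi (0, r)" for q
  proof (induction q rule: int_induct[where k=0])
    case base then show ?case by simp
  next
    case (step1 i)
    show ?case
    proof
      fix r
      have "psi (0, 3 * (i + 1) + r) = psi (0, (3 * i + r) + 3)" by (simp add: algebra_simps)
      also have "\<dots> = psi (0, 3 * i + r)" by (rule per)
      finally show "psi (0, 3 * (i + 1) + r) = psi (0, r)" using step1(2) by simp
    qed
  next
    case (step2 i)
    show ?case
    proof
      fix r
      have "psi (0, 3 * i + r) = psi (0, (3 * (i - 1) + r) + 3)" by (simp add: algebra_simps)
      also have "\<dots> = psi (0, 3 * (i - 1) + r)" by (rule per)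
      finally show "psi (0, 3 * (i - 1) + r) = psi (0, r)" using step2(2) by simp
    qed
  qed
  have red: "psi (0, n) = psi (0, n mod 3)" for n
    using perq[rule_format, of "n div 3" "n mod 3"] by simp
  have p21: "psi (0, 2) = psi (0, 1)"
  proof -
    have "psi (0, 2) = psi (2, 0)" using R3[of 0 2] by simp
    also have "\<dots> = psi (0, -2)" using diag[rule_format, of 2 0] by simp
    also have "\<dots> = psi (0, 1)" using red[of "-2"] by simp
    finally show ?thesis .
  qed
  have m: "(l - k) mod 3 = 0 \<or> (l - k) mod 3 = 1 \<or> (l - k) mod 3 = 2" by presburger
  have "psi (k, l) = psi (0, (l - k) mod 3)" using diag[rule_format, of k l] red[of "l - k"] by simp
  then show ?thesis using m p21 by auto
qed

lemma delta_H0: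
  assumes "phi \<in> H0 th"
  shows "lam th (- (of_int q * of_int q) / 2 - of_int p * of_int q) * lam th (of_int ((- p - q) * (k - q)))
     * phi (k - q, l + p + q) = phi (k - p, l - q) * lam th (of_int ((l - q) * p))"
proof -
  define d :: "int \<times> int \<Rightarrow> complex" where "d = (\<lambda>x. if x = (p, q) then 1 else 0)"
  have sd: "{x. d x \<noteq> 0} = {(p, q)}" by (auto simp: d_def)
  have "lmul th (act th omega1 (omega2 th) d) phi = rmul th phi d"
    using assms unfolding H0_def using sd by auto
  then have "lmul th (act th omega1 (omega2 th) d) phi (k, l) = rmul th phi d (k, l)" by simp
  then show ?thesis unfolding lmul_act rmul_def sd by (simp add: d_def)
qed

definition psi :: "real \<Rightarrow> (int \<times> int \<Rightarrow> complex) \<Rightarrow> int \<times> int \<Rightarrow> complex" where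
  "psi th phi x = phi x * lam th (- Q (fst x) (snd x))"

lemma phi_psi: "phi (k, l) = lam th (Q k l) * psi th phi (k, l)"
proof -
  have "lam th (Q k l) * psi th phi (k, l) = phi (k, l) * (lam th (- Q k l) * lam th (Q k l))"
    unfolding psi_def by (simp add: ac_simps)
  then show ?thesis by (simp add: lam_inv)
qed

lemma psi_rel:
  assumes "phi \<in> H0 th"
  shows "psi th phi (k - q, l + p + q) = psi th phi (k - p, l - q)"
proof -
  let ?L1 = "lam th (- (of_int q * of_int q) / 2 - of_int p * of_int q)"
  let ?L2 = "lam th (of_int ((- p - q) * (k - q)))"
  let ?L3 = "lam th (of_int ((l - q) * p))"
  let ?a = "psi th phi (k - q, l + p + q)"
  let ?b = "psi th phi (k - p, l - q)"
  have "?L1 * ?L2 * (lam th (Q (k - q) (l + p + q)) * ?a) = (lam th (Q (k - p) (l - q)) * ?b) * ?L3"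
    using delta_H0[OF assms, of q p k l] by (simp only: phi_psi[of phi "k - q" _ th] phi_psi[of phi "k - p" _ th])
  then have "(?L1 * ?L2 * lam th (Q (k - q) (l + p + q))) * ?a = (lam th (Q (k - p) (l - q)) * ?L3) * ?b"
    by (simp only: ac_simps)
  then have "(lam th (Q (k - p) (l - q)) * ?L3) * ?a = (lam th (Q (k - p) (l - q)) * ?L3) * ?b"
    unfolding id_omega .
  then show ?thesis by simp
qed

lemma psi_g:
  assumes "act th g1 (g2 th) phi = phi"
  shows "psi th phi (k, l) = psi th phi (l + k, - k)"
proof -
  let ?G = "lam th (- (of_int (- k) * of_int (- k)) / 2 - of_int (l + k) * of_int (- k))"
  have "phi (k, l) = phi (l + k, - k) * ?G"
    using act_g[of th phi k l] assms by simp
  then have "lam th (Q k l) * psi th phi (k, l) = (lam th (Q (l + k) (- k)) * psi th phi (l + k, - k)) * ?G"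
    by (simp only: phi_psi[of phi k l th] phi_psi[of phi "l + k" "- k" th])
  then have "lam th (Q k l) * psi th phi (k, l) = (lam th (Q (l + k) (- k)) * ?G) * psi th phi (l + k, - k)"
    by (simp only: ac_simps)
  then have "lam th (Q k l) * psi th phi (k, l) = lam th (Q k l) * psi th phi (l + k, - k)"
    unfolding id_g .
  then show ?thesis by simp
qed

lemma H0_inv_Fb:
  assumes "phi \<in> H0_inv th"
  shows "phi = Fb th (psi th phi (0, 0), psi th phi (0, 1))"
proof -
  have h0: "phi \<in> H0 th" and g: "act th g1 (g2 th) phi = phi"
    using assms unfolding H0_inv_def by (auto dest: spec[where x=1])
  have R1: "psi th phi (k, l + 1) = psi th phi (k - 1, l)" for k l
    using psi_rel[OF h0, of k 0 l 1] by simp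
  have R2: "psi th phi (k - 1, l + 1) = psi th phi (k, l - 1)" for k l
    using psi_rel[OF h0, of k 1 l 0] by simp
  have R3: "psi th phi (k, l) = psi th phi (l + k, - k)" for k l
    using psi_g[OF g] .
  show ?thesis
  proof (rule ext)
    fix kl :: "int \<times> int"
    obtain k l where kl: "kl = (k, l)" by (cases kl)
    show "phi kl = Fb th (psi th phi (0, 0), psi th phi (0, 1)) kl"
      using psi_struct[of "psi th phi", OF R1 R2 R3, of k l] unfolding kl Fb_def
      by (simp add: phi_psi[of phi k l th])
  qed
qed

theorem mainTheorem10:
  fixes \<theta> :: real
  assumes "\<theta> \<notin> \<rat>"
  shows "\<exists>f :: complex \<times> complex \<Rightarrow> (int \<times> int \<Rightarrow> complex).
           (\<forall>x y. f (fst x + fst y, snd x + snd y) = (\<lambda>i. f x i + f y i)) \<and> (\<forall>c x. f (c * fst x, c * snd x) = (\<lambda>i. c * f x i)) \<and>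
           inj f \<and> range f = H0_inv \<theta>"
proof (intro exI[of _ "Fb \<theta>"] conjI allI)
  fix x y :: "complex \<times> complex"
  show "Fb \<theta> (fst x + fst y, snd x + snd y) = (\<lambda>i. Fb \<theta> x i + Fb \<theta> y i)"
    by (rule ext) (auto simp: Fb_def distrib_left split: prod.splits)
next
  fix c :: complex and x :: "complex \<times> complex"
  show "Fb \<theta> (c * fst x, c * snd x) = (\<lambda>i. c * Fb \<theta> x i)"
    by (rule ext) (auto simp: Fb_def ac_simps split: prod.splits)
next
  show "inj (Fb \<theta>)"
  proof (rule injI)
    fix x y assume e: "Fb \<theta> x = Fb \<theta> y"
    have "Fb \<theta> x (0, 0) = Fb \<theta> y (0, 0)" using e by simp
    then have 1: "fst x = fst y" by (simp add: Fb_def Q_def)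
    have "Fb \<theta> x (0, 1) = Fb \<theta> y (0, 1)" using e by simp
    then have 2: "snd x = snd y" by (simp add: Fb_def)
    show "x = y" using 1 2 by (simp add: prod_eq_iff)
  qed
next
  show "range (Fb \<theta>) = H0_inv \<theta>"
  proof
    show "range (Fb \<theta>) \<subseteq> H0_inv \<theta>" using Fb_inv by blast
  next
    show "H0_inv \<theta> \<subseteq> range (Fb \<theta>)"
    proof
      fix phi assume "phi \<in> H0_inv \<theta>"
      then show "phi \<in> range (Fb \<theta>)" using H0_inv_Fb by blast
    qed
  qed
qed

end
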